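(* Let $k\in\mathbb{P}$ and let $b\geq 2$ be an integer. Then the sequence $B=\left(1,\frac{b^2-1}{b-1},\dots,\frac{b^k-1}{b-1}\right)$ is orderly, i.e., $opt_B(M)=grd_B(M)$ for all $M\in\mathbb{P}$.
   Context: $\mathbb{P}$ denotes the positive integers and $\mathbb{N}$ the nonnegative integers. For a sequence $B=(b_1,\dots,b_k)$ of positive integers with $1=b_1<b_2<\cdots<b_k$ and $M\in\mathbb{N}$, $opt_B(M)=\min\{\sum_{i=1}^k x_i : \sum_{i=1}^k b_i x_i=M,\ x_i\in\mathbb{N}\}$. $grd_B(M)$ denotes the number of parts used by the greedy strategy: take as many copies of $b_k$ as possible (without exceeding $M$), then as many copies of $b_{k-1}$ as possible for the remainder, and so on down to $b_1=1$. $B$ is called orderly if $opt_B(M)=grd_B(M)$ for all $M>0$. *)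

theory Defs
  imports Main
begin

text \<open>A coin system B is a list [b_1,...,b_k] of positive integers, 1 = b_1 < ... < b_k.\<close>

definition opt_B :: "nat list \<Rightarrow> nat \<Rightarrow> nat" where
  "opt_B B M = (LEAST s. \<exists>x::nat list. length x = length B \<and>
      (\<Sum>i<length B. B ! i * x ! i) = M \<and> (\<Sum>i<length B. x ! i) = s)"

fun grd_desc :: "nat list \<Rightarrow> nat \<Rightarrow> nat" where
  "grd_desc [] M = 0"
| "grd_desc (c # cs) M = M div c + grd_desc cs (M mod c)"

definition grd_B :: "nat list \<Rightarrow> nat \<Rightarrow> nat" where
  "grd_B B M = grd_desc (rev B) M"

definition orderly :: "nat list \<Rightarrow> bool" where
  "orderly B \<longleftrightarrow> (\<forall>M>0. opt_B B M = grd_B B M)"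

end

theory Submission
  imports Defs
begin

definition rr :: "nat \<Rightarrow> nat \<Rightarrow> nat" where
  "rr b i = (b ^ (i + 1) - 1) div (b - 1)"

lemma geo: "(b - 1) * (\<Sum>j\<le>i. b ^ j) = b ^ (i + 1) - (1::nat)"
proof (induction i)
  case 0 then show ?case by simp
next
  case (Suc i)
  have "(b - 1) * (\<Sum>j\<le>Suc i. b ^ j) = (b ^ (i + 1) - 1) + (b - 1) * b ^ (Suc i)"
    using Suc by (simp add: algebra_simps)
  also have "\<dots> = b ^ (Suc i + 1) - 1"
  proof (cases "b = 0")
    case False
    then have "b ^ (i+1) \<ge> 1" by simp
    then show ?thesis by (simp add: algebra_simps diff_mult_distrib)
  qed simp
  finally show ?case .
qed

lemma rr_sum: assumes "b \<ge> 2" shows "rr b i = (\<Sum>j\<le>i. b ^ j)"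
  unfolding rr_def geo[symmetric] using assms by simp

lemma rr0: "b \<ge> 2 \<Longrightarrow> rr b 0 = 1"
  by (simp add: rr_sum)

lemma rrSuc: "b \<ge> 2 \<Longrightarrow> rr b (Suc i) = b * rr b i + 1"
  by (simp add: rr_sum sum_distrib_left power_Suc atMost_Suc_eq_insert_0 sum.reindex)

lemma rr_pos: "b \<ge> 2 \<Longrightarrow> rr b i \<ge> 1"
  by (cases i) (simp_all add: rr0 rrSuc)

definition G :: "nat \<Rightarrow> nat \<Rightarrow> nat \<Rightarrow> nat" where
  "G b j M = grd_desc (rev (map (rr b) [0..<j])) M"

lemma G0[simp]: "G b 0 M = 0" by (simp add: G_def)
lemma GSuc: "G b (Suc j) M = M div rr b j + G b j (M mod rr b j)"
  by (simp add: G_def)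

lemma G_zero[simp]: "G b j 0 = 0"
  by (induction j) (simp_all add: GSuc)

lemma divmod_split:
  fixes c :: nat assumes "s < c" shows "(q*c+s) div c = q" "(q*c+s) mod c = s"
  using assms by simp_all

lemma Zp: assumes "b \<ge> 2" shows "G b i (rr b i - 1) \<le> b"
proof (cases i)
  case (Suc i')
  have c1: "rr b i' \<ge> 1" using rr_pos[OF assms] .
  have e: "rr b i - 1 = b * rr b i' + 0" using Suc rrSuc[OF assms, of i'] by simp
  have d: "(b * rr b i' + 0) div rr b i' = b" "(b * rr b i' + 0) mod rr b i' = 0"
    using divmod_split[of 0 "rr b i'" b] c1 by simp_all
  have "G b (Suc i') (b * rr b i' + 0) = b"
    unfolding GSuc d by simp
  then show ?thesis using e Suc by simp
qed simp

lemma Y: assumes "b \<ge> 2" shows "G b j m \<le> G b j (m+1) + (b - 1)"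
proof (induction j arbitrary: m)
  case 0 then show ?case by simp
next
  case (Suc j)
  define c where "c = rr b j"
  have c1: "c \<ge> 1" using rr_pos[OF assms] c_def by simp
  define q where "q = m div c"
  define s where "s = m mod c"
  have m: "m = q*c + s" using q_def s_def by simp
  have sc: "s < c" using c1 s_def by simp
  show ?case
  proof (cases "s + 1 < c")
    case True
    have "m + 1 = q*c + (s+1)" using m by simp
    then have "G b (Suc j) (m+1) = q + G b j (s+1)"
      unfolding GSuc c_def[symmetric] using divmod_split[OF True] by simp
    moreover have "G b (Suc j) m = q + G b j s"
      unfolding GSuc c_def[symmetric] using divmod_split[OF sc] m by simp
    ultimately show ?thesis using Suc.IH[of s] by simp
  next
    case False
    then have s: "s = c - 1" using sc by simp
    have "m + 1 = (q+1)*c + 0" using m s c1 by simp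
    then have "G b (Suc j) (m+1) = q + 1"
      unfolding GSuc c_def[symmetric] using divmod_split[of 0 c "q+1"] c1 by simp
    moreover have "G b (Suc j) m = q + G b j (c - 1)"
      unfolding GSuc c_def[symmetric] using divmod_split[OF sc] m s by simp
    moreover have "G b j (c - 1) \<le> b" using Zp[OF assms] c_def by simp
    ultimately show ?thesis by simp
  qed
qed

lemma X: assumes "b \<ge> 2" shows "G b (Suc i) N + 1 \<le> G b (Suc i) (N + rr b (Suc i))"
proof -
  define c where "c = rr b i"
  have c1: "c \<ge> 1" using rr_pos[OF assms] c_def by simp
  define q where "q = N div c"
  define s where "s = N mod c"
  have m: "N = q*c + s" using q_def s_def by simp
  have sc: "s < c" using c1 s_def by simp
  have R: "rr b (Suc i) = b * c + 1" using rrSuc[OF assms] c_def by simp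
  have GN: "G b (Suc i) N = q + G b i s"
    unfolding GSuc c_def[symmetric] using divmod_split[OF sc] m by simp
  show ?thesis
  proof (cases "s + 1 < c")
    case True
    have "N + rr b (Suc i) = (q+b)*c + (s+1)" using m R by (simp add: algebra_simps)
    then have "G b (Suc i) (N + rr b (Suc i)) = q + b + G b i (s+1)"
      unfolding GSuc c_def[symmetric] using divmod_split[OF True] by simp
    then show ?thesis using GN Y[OF assms, of i s] assms by simp
  next
    case False
    then have s: "s = c - 1" using sc by simp
    have "N + rr b (Suc i) = (q+b+1)*c + 0" using m R s c1 by (simp add: algebra_simps)
    then have "G b (Suc i) (N + rr b (Suc i)) = q + b + 1"
      unfolding GSuc c_def[symmetric] using divmod_split[of 0 c "q+b+1"] c1 by simp
    moreover have "G b i (c - 1) \<le> b" using Zp[OF assms] c_def by simp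
    ultimately show ?thesis using GN s by simp
  qed
qed

lemma Xt: assumes "b \<ge> 2" shows "G b (Suc i) N + t \<le> G b (Suc i) (N + t * rr b (Suc i))"
proof (induction t)
  case 0 then show ?case by simp
next
  case (Suc t)
  have "G b (Suc i) N + Suc t \<le> G b (Suc i) (N + t * rr b (Suc i)) + 1" using Suc by simp
  also have "\<dots> \<le> G b (Suc i) (N + t * rr b (Suc i) + rr b (Suc i))" using X[OF assms] by blast
  finally show ?case by (simp add: algebra_simps)
qed

lemma lower: assumes "b \<ge> 2"
  shows "(\<Sum>i<j. rr b i * x i) = M \<Longrightarrow> G b j M \<le> (\<Sum>i<j. x i)"
proof (induction j arbitrary: M)
  case 0 then show ?case by simp
next
  case (Suc j)
  define M' where "M' = (\<Sum>i<j. rr b i * x i)"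
  define t where "t = x j"
  have M: "M = M' + t * rr b j" using Suc.prems M'_def t_def by (simp add: mult.commute)
  have IH: "G b j M' \<le> (\<Sum>i<j. x i)" using Suc.IH M'_def by simp
  show ?case
  proof (cases j)
    case 0
    then show ?thesis using M rr0[OF assms] M'_def t_def by (simp add: GSuc)
  next
    case (Suc i)
    define c where "c = rr b j"
    have c1: "c \<ge> 1" using rr_pos[OF assms] c_def by simp
    define q where "q = M div c"
    define m where "m = M mod c"
    have Mq: "M = q*c + m" using q_def m_def by simp
    have tq: "t \<le> q" using M c_def q_def c1
      by (metis div_le_mono le_add2 nonzero_mult_div_cancel_right not_one_le_zero)
    have M'eq: "M' = m + (q - t) * c" using M Mq tq c_def
      by (simp add: diff_mult_distrib)
    have "G b j m + (q - t) \<le> G b j M'"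
      using Xt[OF assms, of i m "q - t"] M'eq c_def Suc by simp
    moreover have "G b (Suc j) M = q + G b j m" by (simp add: GSuc c_def[symmetric] q_def m_def)
    ultimately show ?thesis using IH tq t_def by simp
  qed
qed

lemma upper: assumes "b \<ge> 2"
  shows "\<exists>x. (\<Sum>i<Suc j. rr b i * x i) = M \<and> (\<Sum>i<Suc j. x i) = G b (Suc j) M"
proof (induction j arbitrary: M)
  case 0
  show ?case by (rule exI[of _ "\<lambda>_. M"]) (simp add: rr0[OF assms] GSuc)
next
  case (Suc j)
  define c where "c = rr b (Suc j)"
  obtain x where x: "(\<Sum>i<Suc j. rr b i * x i) = M mod c" "(\<Sum>i<Suc j. x i) = G b (Suc j) (M mod c)"
    using Suc.IH by blast
  define y where "y = x(Suc j := M div c)"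
  have e1: "(\<Sum>i<Suc j. rr b i * y i) = (\<Sum>i<Suc j. rr b i * x i)"
    by (rule sum.cong) (auto simp: y_def)
  have e2: "(\<Sum>i<Suc j. y i) = (\<Sum>i<Suc j. x i)"
    by (rule sum.cong) (auto simp: y_def)
  show ?case
    apply (rule exI[of _ y])
    using e1 e2 x by (simp add: y_def c_def GSuc[of b "Suc j"] mult.commute)
qed

lemma list_sum1: "(\<Sum>i<k. map f [0..<k] ! i * map x [0..<k] ! i) = (\<Sum>i<k. f i * x i)"
  by (rule sum.cong) auto
lemma list_sum2: "(\<Sum>i<k. map x [0..<k] ! i) = (\<Sum>i<k. (x i::nat))"
  by (rule sum.cong) auto
lemma list_sum3: "length xs = k \<Longrightarrow> (\<Sum>i<k. map f [0..<k] ! i * xs ! i) = (\<Sum>i<k. f i * xs ! i)"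
  by (rule sum.cong) auto

theorem lemma3p1:
  fixes k b :: nat
  assumes "k \<ge> 1" and "b \<ge> 2"
  shows "orderly (map (\<lambda>i. (b ^ (i + 1) - 1) div (b - 1)) [0..<k])"
proof -
  have eqB: "map (\<lambda>i. (b ^ (i + 1) - 1) div (b - 1)) [0..<k] = map (rr b) [0..<k]"
    by (simp add: rr_def)
  obtain j where kj: "k = Suc j" using assms(1) by (cases k) auto
  let ?B = "map (rr b) [0..<k]"
  have grd: "grd_B ?B M = G b k M" for M by (simp add: grd_B_def G_def)
  have "opt_B ?B M = G b k M" for M
    unfolding opt_B_def
  proof (rule Least_equality)
    obtain x where x: "(\<Sum>i<k. rr b i * x i) = M" "(\<Sum>i<k. x i) = G b k M"
      using upper[OF assms(2), of j M] kj by blast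
    show "\<exists>xs. length xs = length ?B \<and> (\<Sum>i<length ?B. ?B ! i * xs ! i) = M \<and>
       (\<Sum>i<length ?B. xs ! i) = G b k M"
    proof (intro exI[of _ "map x [0..<k]"] conjI)
      show "(\<Sum>i<length ?B. ?B ! i * map x [0..<k] ! i) = M"
        using x(1) list_sum1[of "rr b"] by simp
      show "(\<Sum>i<length ?B. map x [0..<k] ! i) = G b k M"
        using x(2) list_sum2 by simp
    qed simp
  next
    fix s assume "\<exists>xs. length xs = length ?B \<and> (\<Sum>i<length ?B. ?B ! i * xs ! i) = M \<and>
       (\<Sum>i<length ?B. xs ! i) = s"
    then obtain xs where xs: "(\<Sum>i<k. rr b i * xs ! i) = M" "(\<Sum>i<k. xs ! i) = s"
      using list_sum3[where k=k and f="rr b"] by auto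
    show "G b k M \<le> s" using lower[OF assms(2), where j=k and x="\<lambda>i. xs ! i" and M=M] xs by simp
  qed
  then show ?thesis unfolding eqB orderly_def using grd by simp
qed

end
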